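(* Let $\mathcal{A}$ be a finite alphabet, $\Omega=\mathcal{A}^{\mathbb{N}}$, and $\mu$ a Borel probability measure on $\Omega$ (not necessarily shift-invariant). For every recursive reversible coding procedure $Z:\mathcal{A}^*\to\{0,1\}^*$ and every real $q>0$, $$h^q_Z(\Omega)\ge h^q_{AIC}(\Omega).$$
   Context: For $\omega\in\Omega$, $\omega^n$ is the string of its first $n$ symbols. A recursive reversible coding procedure is an injective recursive map $Z:\mathcal{A}^*\to\{0,1\}^*$, and $I_Z(s)=|Z(s)|$. $AIC(s)=\min\{|P|:C(P)=s\}$ for a fixed universal computing machine $C$. For an information function $I\in\{AIC,I_Z\}$, the $q$-entropy is $h^q(\Omega)=\limsup_{n\to\infty}\int_\Omega\frac{I(\omega^n)}{n^q}\,d\mu$; $h^q_{AIC}$ and $h^q_Z$ denote it for $I=AIC$ and $I=I_Z$ respectively. *)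

theory Defs
  imports "HOL-Probability.Probability" "HOL-Library.Countable" "HOL-Library.Nat_Bijection"
begin

datatype recf = Zero | Succ | Proj nat | Comp recf "recf list" | Prim recf recf | Mn recf

inductive eval_recf :: "recf \<Rightarrow> nat list \<Rightarrow> nat \<Rightarrow> bool" where
  zero: "eval_recf Zero xs 0"
| succ: "eval_recf Succ (x # xs) (Suc x)"
| proj: "i < length xs \<Longrightarrow> eval_recf (Proj i) xs (xs ! i)"
| comp: "list_all2 (\<lambda>g y. eval_recf g xs y) gs ys \<Longrightarrow> eval_recf f ys z
           \<Longrightarrow> eval_recf (Comp f gs) xs z"
| prim0: "eval_recf f xs y \<Longrightarrow> eval_recf (Prim f g) (0 # xs) y"
| primS: "eval_recf (Prim f g) (n # xs) y \<Longrightarrow> eval_recf g (n # y # xs) z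
           \<Longrightarrow> eval_recf (Prim f g) (Suc n # xs) z"
| mn: "eval_recf f (n # xs) 0 \<Longrightarrow> (\<forall>m<n. \<exists>y>0. eval_recf f (m # xs) y)
           \<Longrightarrow> eval_recf (Mn f) xs n"

definition enc_str :: "'b::countable list \<Rightarrow> nat" where
  "enc_str xs = list_encode (map to_nat xs)"

definition partial_recursive :: "('b::countable list \<Rightarrow> 'c::countable list option) \<Rightarrow> bool" where
  "partial_recursive F \<longleftrightarrow>
     (\<exists>f. \<forall>xs y. eval_recf f [enc_str xs] y \<longleftrightarrow> (\<exists>ys. F xs = Some ys \<and> y = enc_str ys))"

definition recursive :: "('b::countable list \<Rightarrow> 'c::countable list) \<Rightarrow> bool" where
  "recursive F \<longleftrightarrow> partial_recursive (\<lambda>xs. Some (F xs))"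

definition recursive_reversible_coding :: "('a::countable list \<Rightarrow> bool list) \<Rightarrow> bool" where
  "recursive_reversible_coding Z \<longleftrightarrow> inj Z \<and> recursive Z"

definition universal_machine :: "(bool list \<Rightarrow> 'a::countable list option) \<Rightarrow> bool" where
  "universal_machine C \<longleftrightarrow> partial_recursive C \<and>
     (\<forall>D :: bool list \<Rightarrow> 'a list option. partial_recursive D \<longrightarrow>
        (\<exists>pD. \<forall>p. C (pD @ p) = D p))"

definition AIC :: "(bool list \<Rightarrow> 'a list option) \<Rightarrow> 'a list \<Rightarrow> nat" where
  "AIC C s = (LEAST n. \<exists>P. length P = n \<and> C P = Some s)"

definition I_Z :: "('a list \<Rightarrow> bool list) \<Rightarrow> 'a list \<Rightarrow> nat" where
  "I_Z Z s = length (Z s)"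

definition initial :: "(nat \<Rightarrow> 'a) \<Rightarrow> nat \<Rightarrow> 'a list" where
  "initial \<omega> n = map \<omega> [0..<n]"

definition q_entropy :: "(nat \<Rightarrow> 'a) measure \<Rightarrow> ('a list \<Rightarrow> nat) \<Rightarrow> real \<Rightarrow> ereal" where
  "q_entropy M I q =
     limsup (\<lambda>n. ereal (\<integral>\<omega>. real (I (initial \<omega> n)) / (real n) powr q \<partial>M))"

end

theory Submission
  imports Defs
begin


definition cmp :: "nat \<Rightarrow> recf \<Rightarrow> (nat list \<Rightarrow> nat) \<Rightarrow> bool" where
  "cmp k f F \<longleftrightarrow> (\<forall>xs y. length xs = k \<longrightarrow> (eval_recf f xs y \<longleftrightarrow> y = F xs))"

inductive_cases ev_Zero: "eval_recf Zero xs y"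
inductive_cases ev_Succ: "eval_recf Succ xs y"
inductive_cases ev_Proj: "eval_recf (Proj i) xs y"
inductive_cases ev_Comp: "eval_recf (Comp f gs) xs y"
inductive_cases ev_Prim: "eval_recf (Prim f g) xs y"
inductive_cases ev_Mn: "eval_recf (Mn f) xs y"

lemma cmp_Zero: "cmp k Zero (\<lambda>_. 0)"
  by (auto simp: cmp_def intro: eval_recf.intros elim: ev_Zero)

lemma cmp_Succ: "cmp (Suc k) Succ (\<lambda>xs. Suc (hd xs))"
  unfolding cmp_def
proof (intro allI impI)
  fix xs :: "nat list" and y assume "length xs = Suc k"
  then obtain x ys where xs: "xs = x # ys" by (cases xs) auto?
  show "eval_recf Succ xs y \<longleftrightarrow> y = Suc (hd xs)"
    unfolding xs by (auto intro: eval_recf.intros elim: ev_Succ)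
qed

lemma cmp_Proj: "i < k \<Longrightarrow> cmp k (Proj i) (\<lambda>xs. xs ! i)"
  by (auto simp: cmp_def intro: eval_recf.intros elim: ev_Proj)

lemma la2_eval:
  assumes "list_all2 (cmp k) gs Gs" "length xs = k"
  shows "list_all2 (\<lambda>g y. eval_recf g xs y) gs ys \<longleftrightarrow> ys = map (\<lambda>G. G xs) Gs"
  using assms(1)
proof (induction arbitrary: ys rule: list_all2_induct)
  case Nil then show ?case by auto
next
  case (Cons g gs G Gs)
  then show ?case using assms(2) by (cases ys) (auto simp: cmp_def)
qed

lemma cmp_Comp:
  assumes "cmp m f F" "list_all2 (cmp k) gs Gs" "length gs = m"
    and "\<And>xs. length xs = k \<Longrightarrow> H xs = F (map (\<lambda>G. G xs) Gs)"
  shows "cmp k (Comp f gs) H"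
  unfolding cmp_def
proof (intro allI impI)
  fix xs :: "nat list" and y assume l: "length xs = k"
  have lG: "length Gs = m" using assms(2,3) list_all2_lengthD by fastforce
  show "eval_recf (Comp f gs) xs y \<longleftrightarrow> y = H xs"
  proof
    assume "eval_recf (Comp f gs) xs y"
    then obtain ys where "list_all2 (\<lambda>g y. eval_recf g xs y) gs ys" "eval_recf f ys y"
      by (auto elim: ev_Comp)
    then show "y = H xs" using la2_eval[OF assms(2) l] assms(1,4) l lG by (auto simp: cmp_def)
  next
    assume "y = H xs"
    moreover have "list_all2 (\<lambda>g y. eval_recf g xs y) gs (map (\<lambda>G. G xs) Gs)"
      using la2_eval[OF assms(2) l] by simp
    moreover have "eval_recf f (map (\<lambda>G. G xs) Gs) (F (map (\<lambda>G. G xs) Gs))"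
      using assms(1) lG by (auto simp: cmp_def)
    ultimately show "eval_recf (Comp f gs) xs y" using assms(4)[OF l] by (auto intro: eval_recf.intros)
  qed
qed

lemma cmp_Prim:
  assumes "cmp k f F" "cmp (Suc (Suc k)) g G"
    and "\<And>n xs. length xs = k \<Longrightarrow> H (n # xs) = rec_nat (F xs) (\<lambda>n y. G (n # y # xs)) n"
  shows "cmp (Suc k) (Prim f g) H"
  unfolding cmp_def
proof (intro allI impI)
  fix xs :: "nat list" and y assume "length xs = Suc k"
  then obtain n ys where xs: "xs = n # ys" and l: "length ys = k" by (cases xs) auto?
  have "eval_recf (Prim f g) (n # ys) y \<longleftrightarrow> y = rec_nat (F ys) (\<lambda>n y. G (n # y # ys)) n" for y
  proof (induction n arbitrary: y)
    case 0
    show ?case using assms(1) l by (auto simp: cmp_def intro: eval_recf.intros elim: ev_Prim)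
  next
    case (Suc n)
    show ?case
    proof
      assume "eval_recf (Prim f g) (Suc n # ys) y"
      then obtain z where "eval_recf (Prim f g) (n # ys) z" "eval_recf g (n # z # ys) y"
        by (auto elim: ev_Prim)
      then show "y = rec_nat (F ys) (\<lambda>n y. G (n # y # ys)) (Suc n)"
        using Suc assms(2) l by (auto simp: cmp_def)
    next
      assume "y = rec_nat (F ys) (\<lambda>n y. G (n # y # ys)) (Suc n)"
      then show "eval_recf (Prim f g) (Suc n # ys) y"
        using Suc assms(2) l by (auto simp: cmp_def intro: eval_recf.intros)
    qed
  qed
  then show "eval_recf (Prim f g) xs y \<longleftrightarrow> y = H xs" using assms(3)[OF l] xs by simp
qed

lemma eval_Mn:
  assumes "cmp (Suc k) g G" "length xs = k"
  shows "eval_recf (Mn g) xs n \<longleftrightarrow> G (n # xs) = 0 \<and> (\<forall>m<n. G (m # xs) \<noteq> 0)"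
  using assms by (auto simp: cmp_def intro!: eval_recf.intros elim!: ev_Mn)

lemma cmp_Mn:
  assumes "cmp (Suc k) g G" "\<And>xs. length xs = k \<Longrightarrow> \<exists>n. G (n # xs) = 0"
    and "\<And>xs. length xs = k \<Longrightarrow> H xs = (LEAST n. G (n # xs) = 0)"
  shows "cmp k (Mn g) H"
  unfolding cmp_def
proof (intro allI impI)
  fix xs :: "nat list" and y assume l: "length xs = k"
  show "eval_recf (Mn g) xs y \<longleftrightarrow> y = H xs"
    unfolding eval_Mn[OF assms(1) l] assms(3)[OF l]
    by (metis (mono_tags, lifting) LeastI_ex assms(2) l not_less_Least linorder_neqE_nat)
qed



lemma cmp_Comp': "cmp (length gs) f F \<Longrightarrow> list_all2 (cmp k) gs Gs \<Longrightarrow> cmp k (Comp f gs) (\<lambda>xs. F (map (\<lambda>G. G xs) Gs))"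
  by (rule cmp_Comp) auto?

lemma cmp_cong: "cmp k f F \<Longrightarrow> (\<And>xs. length xs = k \<Longrightarrow> F xs = H xs) \<Longrightarrow> cmp k f H"
  by (auto simp: cmp_def)

lemma la2_Nil: "list_all2 P [] []" by simp
lemma la2_Cons: "P x y \<Longrightarrow> list_all2 P xs ys \<Longrightarrow> list_all2 P (x#xs) (y#ys)" by simp

lemma cmp_Prim':
  assumes "cmp k f F" "cmp (Suc (Suc k)) g G" "k' = Suc k"
    and "\<And>xs. length xs = k \<Longrightarrow> H (0 # xs) = F xs"
    and "\<And>n xs. length xs = k \<Longrightarrow> H (Suc n # xs) = G (n # H (n # xs) # xs)"
  shows "cmp k' (Prim f g) H"
proof -
  have "H (n # xs) = rec_nat (F xs) (\<lambda>n y. G (n # y # xs)) n" if "length xs = k" for n xs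
    using that by (induction n) (auto simp: assms(4,5))
  then show ?thesis using cmp_Prim[of k f F g G H] assms by auto
qed

lemma cmp_Succ': "k = Suc k0 \<Longrightarrow> cmp k Succ (\<lambda>xs. Suc (xs!0))"
  using cmp_Succ[of k0] by (auto simp: cmp_def length_Suc_conv)

fun constf :: "nat \<Rightarrow> recf" where
  "constf 0 = Zero" | "constf (Suc c) = Comp Succ [constf c]"

lemma cmp_constf: "cmp k (constf c) (\<lambda>_. c)"
proof (induction c)
  case 0 then show ?case by (simp add: cmp_Zero)
next
  case (Suc c) then show ?case
    by (auto intro!: cmp_Comp[OF cmp_Succ[of 0]])
qed

lemma len1: "length xs = Suc 0 \<longleftrightarrow> (\<exists>a. xs = [a])"
  by (cases xs) auto?
lemma len2: "length xs = Suc (Suc 0) \<longleftrightarrow> (\<exists>a b. xs = [a, b])"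
  by (auto simp: length_Suc_conv)

lemma cmp_const1: "cmp k (Comp Succ [Zero]) (\<lambda>_. 1)"
  using cmp_constf[of k 1] by simp

lemmas cmpI = cmp_const1 cmp_Comp' la2_Cons la2_Nil cmp_Proj cmp_Succ' cmp_Zero cmp_constf

definition "Add = Prim (Proj 0) (Comp Succ [Proj 1])"
lemma cmp_Add: "cmp 2 Add (\<lambda>xs. xs!0 + xs!1)"
  unfolding Add_def
  by (rule cmp_Prim'[where k=1], (rule cmpI | simp)+) (auto simp: len1)?

definition "Pred = Prim Zero (Proj 0)"
lemma cmp_Pred: "cmp 1 Pred (\<lambda>xs. xs!0 - 1)"
  unfolding Pred_def
  by (rule cmp_Prim'[where k=0], (rule cmpI | simp)+) (auto)?

lemma cmp_Pred': "k = 1 \<Longrightarrow> cmp k Pred (\<lambda>xs. xs!0 - 1)" using cmp_Pred by simp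
definition "Sub0 = Prim (Proj 0) (Comp Pred [Proj 1])"
lemma cmp_Sub0: "cmp 2 Sub0 (\<lambda>xs. xs!1 - xs!0)"
  unfolding Sub0_def
  by (rule cmp_Prim'[where k=1], (rule cmpI cmp_Pred' | simp)+) (auto simp: len1)?

lemma cmp_Sub0': "k = 2 \<Longrightarrow> cmp k Sub0 (\<lambda>xs. xs!1 - xs!0)" using cmp_Sub0 by simp
definition "Sub = Comp Sub0 [Proj 1, Proj 0]"
lemma cmp_Sub: "cmp 2 Sub (\<lambda>xs. xs!0 - xs!1)"
  unfolding Sub_def
  by (rule cmp_cong, (rule cmpI cmp_Sub0' | simp)+) auto?

lemma cmp_Add': "k = 2 \<Longrightarrow> cmp k Add (\<lambda>xs. xs!0 + xs!1)" using cmp_Add by simp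
definition "Mul = Prim Zero (Comp Add [Proj 1, Proj 2])"
lemma cmp_Mul: "cmp 2 Mul (\<lambda>xs. xs!0 * xs!1)"
  unfolding Mul_def
  by (rule cmp_Prim'[where k=1], (rule cmpI cmp_Add' | simp)+) (auto simp: len1)?

definition "Sg = Prim Zero (Comp Succ [Zero])"
lemma cmp_Sg: "cmp 1 Sg (\<lambda>xs. if xs!0 = 0 then 0 else 1)"
  unfolding Sg_def
  by (rule cmp_Prim'[where k=0], (rule cmpI | simp)+) (auto)?

definition "Nsg = Prim (Comp Succ [Zero]) Zero"
lemma cmp_Nsg: "cmp 1 Nsg (\<lambda>xs. if xs!0 = 0 then 1 else 0)"
  unfolding Nsg_def
  by (rule cmp_Prim'[where k=0], (rule cmpI | simp)+) (auto)?

lemma cmp_Sub': "k = 2 \<Longrightarrow> cmp k Sub (\<lambda>xs. xs!0 - xs!1)" using cmp_Sub by simp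
lemma cmp_Mul': "k = 2 \<Longrightarrow> cmp k Mul (\<lambda>xs. xs!0 * xs!1)" using cmp_Mul by simp
lemma cmp_Sg': "k = 1 \<Longrightarrow> cmp k Sg (\<lambda>xs. if xs!0 = 0 then 0 else 1)" using cmp_Sg by simp
lemma cmp_Nsg': "k = 1 \<Longrightarrow> cmp k Nsg (\<lambda>xs. if xs!0 = 0 then 1 else 0)" using cmp_Nsg by simp

lemmas cmpI2 = cmpI cmp_Add' cmp_Pred' cmp_Sub' cmp_Mul' cmp_Sg' cmp_Nsg'

definition "Absd = Comp Add [Sub, Comp Sub [Proj 1, Proj 0]]"
lemma cmp_Absd: "cmp 2 Absd (\<lambda>xs. (xs!0 - xs!1) + (xs!1 - xs!0))"
  unfolding Absd_def
  by (rule cmp_cong, (rule cmpI2 | simp)+) auto?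

definition "Tri = Prim Zero (Comp Add [Proj 1, Comp Succ [Proj 0]])"
lemma cmp_Tri: "cmp 1 Tri (\<lambda>xs. triangle (xs!0))"
  unfolding Tri_def
  by (rule cmp_Prim'[where k=0], (rule cmpI2 | simp)+) (auto)?


lemma cmp_Tri': "k = 1 \<Longrightarrow> cmp k Tri (\<lambda>xs. triangle (xs!0))" using cmp_Tri by simp
lemma cmp_Absd': "k = 2 \<Longrightarrow> cmp k Absd (\<lambda>xs. (xs!0 - xs!1) + (xs!1 - xs!0))" using cmp_Absd by simp

lemmas cmpI3 = cmpI2 cmp_Tri' cmp_Absd'


lemma tri_mono: "a \<le> b \<Longrightarrow> triangle a \<le> triangle b"
  unfolding triangle_def by (intro div_le_mono mult_le_mono) auto

lemma Tf_eq: "(LEAST t. Suc z - triangle (Suc t) = 0) = fst (prod_decode z) + snd (prod_decode z)"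
proof -
  obtain x y where d: "prod_decode z = (x, y)" by (cases "prod_decode z")
  have "prod_encode (x, y) = z" using prod_decode_inverse[of z] d by simp
  then have z: "z = triangle (x + y) + x" by (simp add: prod_encode_def)
  show ?thesis unfolding d fst_conv snd_conv
  proof (rule Least_equality)
    show "Suc z - triangle (Suc (x + y)) = 0" using z by simp
  next
    fix t assume "Suc z - triangle (Suc t) = 0"
    then have lt: "z < triangle (Suc t)" by simp
    show "x + y \<le> t"
    proof (rule ccontr)
      assume "\<not> x + y \<le> t"
      then have "triangle (Suc t) \<le> triangle (x + y)" by (intro tri_mono) simp
      then show False using lt z by simp
    qed
  qed
qed
definition "TfG = Comp Sub [Comp Succ [Proj 1], Comp Tri [Comp Succ [Proj 0]]]"
lemma cmp_TfG: "cmp 2 TfG (\<lambda>xs. Suc (xs!1) - triangle (Suc (xs!0)))"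
  unfolding TfG_def by (rule cmp_cong, (rule cmpI3 | simp)+)

definition "Tf = Mn TfG"
lemma ex_tri: "\<exists>n. Suc z - triangle (Suc n) = 0"
  by (rule exI[of _ z]) simp
lemma ex_tri': "\<exists>n. a \<le> triangle n + n"
  by (rule exI[of _ a]) simp
lemma Tf_eq': "(LEAST n. a \<le> triangle n + n) = fst (prod_decode a) + snd (prod_decode a)"
  using Tf_eq[of a] by simp

lemma cmp_Tf: "cmp 1 Tf (\<lambda>xs. fst (prod_decode (xs!0)) + snd (prod_decode (xs!0)))"
proof -
  have g: "cmp (Suc 1) TfG (\<lambda>xs. Suc (xs!1) - triangle (Suc (xs!0)))"
    using cmp_TfG by (simp add: numeral_2_eq_2)
  show ?thesis unfolding Tf_def
    by (rule cmp_Mn[OF g]) (auto simp: len1 Tf_eq' intro: ex_tri')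
qed
lemma cmp_Tf': "k = 1 \<Longrightarrow> cmp k Tf (\<lambda>xs. fst (prod_decode (xs!0)) + snd (prod_decode (xs!0)))"
  using cmp_Tf by simp

lemma pfst_eq: "z - triangle (fst (prod_decode z) + snd (prod_decode z)) = fst (prod_decode z)"
proof -
  obtain x y where d: "prod_decode z = (x, y)" by (cases "prod_decode z")
  have "prod_encode (x, y) = z" using prod_decode_inverse[of z] d by simp
  then have z: "z = triangle (x + y) + x" by (simp add: prod_encode_def)
  show ?thesis using d z by simp
qed


definition "Pfst = Comp Sub [Proj 0, Comp Tri [Tf]]"
lemma cmp_Pfst: "cmp 1 Pfst (\<lambda>xs. fst (prod_decode (xs!0)))"
  unfolding Pfst_def by (rule cmp_cong, (rule cmpI3 cmp_Tf' | simp)+) (simp add: pfst_eq)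
lemma cmp_Pfst': "k = 1 \<Longrightarrow> cmp k Pfst (\<lambda>xs. fst (prod_decode (xs!0)))" using cmp_Pfst by simp

definition "Psnd = Comp Sub [Tf, Pfst]"
lemma cmp_Psnd: "cmp 1 Psnd (\<lambda>xs. snd (prod_decode (xs!0)))"
  unfolding Psnd_def by (rule cmp_cong, (rule cmpI3 cmp_Tf' cmp_Pfst' | simp)+)
lemma cmp_Psnd': "k = 1 \<Longrightarrow> cmp k Psnd (\<lambda>xs. snd (prod_decode (xs!0)))" using cmp_Psnd by simp

fun InL :: "nat list \<Rightarrow> recf" where
  "InL [] = Zero"
| "InL (s # ss) = Comp Add [Comp Nsg [Comp Absd [Proj 0, constf s]], InL ss]"

lemma cmp_InL: "cmp 1 (InL ss) (\<lambda>xs. length (filter (\<lambda>s. s = xs!0) ss))"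
proof (induction ss)
  case Nil then show ?case by (simp add: cmp_Zero)
next
  case (Cons s ss)
  show ?case unfolding InL.simps
    by (rule cmp_cong, (rule cmpI3 Cons | simp)+)
qed

definition "InS ss = Comp Sg [InL ss]"
lemma cmp_InS0: "cmp 1 (InS ss) (\<lambda>xs. if xs!0 \<in> set ss then 1 else 0)"
  unfolding InS_def by (rule cmp_cong, (rule cmpI3 cmp_InL | simp)+) (auto simp: filter_empty_conv)
lemma cmp_InS: "k = 1 \<Longrightarrow> cmp k (InS ss) (\<lambda>xs. if xs!0 \<in> set ss then 1 else 0)"
  using cmp_InS0 by simp
definition stepN :: "nat set \<Rightarrow> nat \<Rightarrow> nat" where
  "stepN S c = (if c = 0 then 0 else if fst (prod_decode (c - 1)) \<in> S then snd (prod_decode (c - 1)) else c)"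

definition "Head = Comp Pfst [Pred]"
definition "Tail = Comp Psnd [Pred]"

definition "Step ss = Comp Mul [Comp Sg [Proj 0], Comp Add [Comp Mul [Comp (InS ss) [Head], Tail],
   Comp Mul [Comp Nsg [Comp (InS ss) [Head]], Proj 0]]]"

lemma cmp_Step0: "cmp 1 (Step ss) (\<lambda>xs. stepN (set ss) (xs!0))"
  unfolding Step_def Head_def Tail_def
  by (rule cmp_cong, (rule cmpI3 cmp_InS cmp_Pfst' cmp_Psnd' | simp)+) (auto simp: stepN_def)
lemma cmp_Step: "k = 1 \<Longrightarrow> cmp k (Step ss) (\<lambda>xs. stepN (set ss) (xs!0))"
  using cmp_Step0 by simp

definition "Iter ss = Prim (Proj 0) (Comp (Step ss) [Proj 1])"
lemma cmp_Iter: "cmp 2 (Iter ss) (\<lambda>xs. (stepN (set ss) ^^ (xs!0)) (xs!1))"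
  unfolding Iter_def
  by (rule cmp_Prim'[where k=1], (rule cmpI3 cmp_Step | simp)+) (auto simp: len1)?
lemma cmp_Iter': "k = 2 \<Longrightarrow> cmp k (Iter ss) (\<lambda>xs. (stepN (set ss) ^^ (xs!0)) (xs!1))" using cmp_Iter by simp

definition "V ss = Comp (Iter ss) [Proj 0, Proj 0]"
lemma cmp_V0: "cmp 1 (V ss) (\<lambda>xs. (stepN (set ss) ^^ (xs!0)) (xs!0))"
  unfolding V_def
  by (rule cmp_cong, (rule cmpI3 cmp_Iter' | simp)+)
lemma cmp_V: "k = 1 \<Longrightarrow> cmp k (V ss) (\<lambda>xs. (stepN (set ss) ^^ (xs!0)) (xs!0))"
  using cmp_V0 by simp
lemma len_le_enc: "length xs \<le> list_encode xs"
proof (induction xs)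
  case (Cons x xs) then show ?case using le_prod_encode_2[of "list_encode xs" x] by simp
qed simp

lemma step_cons: "stepN S (list_encode (x # xs)) = (if x \<in> S then list_encode xs else list_encode (x # xs))"
  by (simp add: stepN_def)

lemma iter_zero: "(stepN S ^^ n) 0 = 0"
  by (induction n) (auto simp: stepN_def)

lemma iter_fix: "stepN S c = c \<Longrightarrow> (stepN S ^^ n) c = c"
  by (induction n) auto

lemma iter_valid: "set xs \<subseteq> S \<Longrightarrow> length xs \<le> n \<Longrightarrow> (stepN S ^^ n) (list_encode xs) = 0"
proof (induction xs arbitrary: n)
  case Nil then show ?case by (simp add: iter_zero)
next
  case (Cons x xs)
  then obtain n' where n: "n = Suc n'" by (cases n) auto
  have "(stepN S ^^ n) (list_encode (x # xs)) = (stepN S ^^ n') (stepN S (list_encode (x # xs)))"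
    unfolding n funpow_Suc_right by simp
  also have "\<dots> = (stepN S ^^ n') (list_encode xs)" using Cons.prems by (simp add: step_cons del: list_encode.simps)
  also have "\<dots> = 0" using Cons n by simp
  finally show ?case .
qed

lemma iter_invalid: "\<not> set xs \<subseteq> S \<Longrightarrow> (stepN S ^^ n) (list_encode xs) \<noteq> 0"
proof (induction xs arbitrary: n)
  case Nil then show ?case by simp
next
  case (Cons x xs)
  show ?case
  proof (cases "x \<in> S")
    case False
    then have "(stepN S ^^ n) (list_encode (x # xs)) = list_encode (x # xs)"
      by (intro iter_fix) (simp add: step_cons del: list_encode.simps)
    then show ?thesis by simp
  next
    case True
    show ?thesis
    proof (cases n)
      case 0 then show ?thesis by simp
    next
      case (Suc n')
      have "(stepN S ^^ n) (list_encode (x # xs)) = (stepN S ^^ n') (stepN S (list_encode (x # xs)))"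
        unfolding Suc funpow_Suc_right by simp
      also have "\<dots> = (stepN S ^^ n') (list_encode xs)" using True by (simp add: step_cons del: list_encode.simps)
      finally show ?thesis using Cons True by simp
    qed
  qed
qed

lemma valid_iff: "(stepN S ^^ m) m = 0 \<longleftrightarrow> set (list_decode m) \<subseteq> S"
proof -
  have "length (list_decode m) \<le> m" using len_le_enc[of "list_decode m"] by simp
  then show ?thesis by (metis iter_valid iter_invalid list_decode_inverse)
qed

lemma cmp_Comp1:
  assumes "cmp k g G" "\<And>xs y. length xs = k \<Longrightarrow> eval_recf f [G xs] y \<longleftrightarrow> y = F (G xs)"
  shows "cmp k (Comp f [g]) (\<lambda>xs. F (G xs))"
  unfolding cmp_def
proof (intro allI impI)
  fix xs :: "nat list" and y assume l: "length xs = k"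
  have e: "eval_recf g xs z \<longleftrightarrow> z = G xs" for z using assms(1) l by (auto simp: cmp_def)
  show "eval_recf (Comp f [g]) xs y \<longleftrightarrow> y = F (G xs)"
  proof
    assume "eval_recf (Comp f [g]) xs y"
    then obtain ys where "list_all2 (\<lambda>g y. eval_recf g xs y) [g] ys" "eval_recf f ys y"
      by (auto elim: ev_Comp)
    then show "y = F (G xs)" using e assms(2)[OF l] by (cases ys) auto
  next
    assume "y = F (G xs)"
    then show "eval_recf (Comp f [g]) xs y" using e assms(2)[OF l]
      by (intro eval_recf.comp[where ys = "[G xs]"]) auto
  qed
qed
definition "Rep ss = Comp Mul [Proj 0, Comp Nsg [V ss]]"
lemma cmp_Rep: "cmp 1 (Rep ss) (\<lambda>xs. xs!0 * (if (stepN (set ss) ^^ (xs!0)) (xs!0) = 0 then 1 else 0))"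
  unfolding Rep_def by (rule cmp_cong, (rule cmpI3 cmp_V | simp)+)

lemma enc_str_inj: "enc_str (a :: 'a::countable list) = enc_str b \<longleftrightarrow> a = b"
proof
  assume "enc_str a = enc_str b"
  then have "map to_nat a = map to_nat b" by (simp add: enc_str_def list_encode_eq)
  then show "a = b" by (simp add: inj_map_eq_map)
qed simp

lemma inv_pr:
  fixes Z :: "'a::finite list \<Rightarrow> bool list"
  assumes "inj Z" "recursive Z"
  shows "partial_recursive (\<lambda>p. if p \<in> range Z then Some (inv Z p) else None)"
proof -
  obtain f where hf: "\<And>xs y. eval_recf f [enc_str xs] y \<longleftrightarrow> y = enc_str (Z xs)"
    using assms(2) unfolding recursive_def partial_recursive_def by auto
  have "finite (range (to_nat :: 'a \<Rightarrow> nat))" by simp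
  then obtain ss where ss: "set ss = range (to_nat :: 'a \<Rightarrow> nat)" using finite_list by blast
  define S where "S = set ss"
  define R where "R m = m * (if (stepN S ^^ m) m = 0 then 1 else 0)" for m
  define dec :: "nat \<Rightarrow> 'a list" where "dec m = map from_nat (list_decode m)" for m
  have Rv: "set (list_decode (R m)) \<subseteq> S" for m
    using valid_iff[where S=S and m=m] by (auto simp: R_def)
  have enc_dec: "enc_str (dec m) = m" if vm: "set (list_decode m) \<subseteq> S" for m
  proof -
    have "map (to_nat \<circ> (from_nat :: nat \<Rightarrow> 'a)) (list_decode m) = list_decode m"
    proof (rule map_idI)
      fix n assume "n \<in> set (list_decode m)"
      then obtain a :: 'a where "n = to_nat a" using vm ss S_def by auto
      then show "(to_nat \<circ> (from_nat :: nat \<Rightarrow> 'a)) n = n" by simp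
    qed
    then show ?thesis by (simp add: enc_str_def dec_def)
  qed
  have dec_enc: "dec (enc_str s) = s" for s
    by (simp add: enc_str_def dec_def comp_def)
  have valid_enc: "set (list_decode (enc_str (s :: 'a list))) \<subseteq> S" for s
    by (auto simp: enc_str_def S_def ss)
  have cF: "cmp 1 (Comp f [Rep ss]) (\<lambda>xs. enc_str (Z (dec (R (xs!0)))))"
  proof (rule cmp_Comp1[where F = "\<lambda>c. enc_str (Z (dec c))"])
    show "cmp 1 (Rep ss) (\<lambda>xs. R (xs!0))" using cmp_Rep[of ss] by (simp add: R_def S_def)
    fix xs :: "nat list" and y
    show "eval_recf f [R (xs ! 0)] y = (y = enc_str (Z (dec (R (xs ! 0)))))"
      using hf[of "dec (R (xs!0))" y] enc_dec[OF Rv] by simp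
  qed
  have cF': "k = 1 \<Longrightarrow> cmp k (Comp f [Rep ss]) (\<lambda>xs. enc_str (Z (dec (R (xs!0)))))" for k
    using cF by simp
  have cV: "k = 1 \<Longrightarrow> cmp k (V ss) (\<lambda>xs. (stepN S ^^ (xs!0)) (xs!0))" for k
    using cmp_V[of k ss] by (simp add: S_def)
  define G2 where "G2 = Comp Add [Comp Sg [Comp (V ss) [Proj 0]], Comp Absd [Comp (Comp f [Rep ss]) [Proj 0], Proj 1]]"
  define GG where "GG xs = (if (stepN S ^^ (xs!0)) (xs!0) = 0 then 0 else 1) +
     ((enc_str (Z (dec (R (xs!0)))) - xs!1) + (xs!1 - enc_str (Z (dec (R (xs!0))))))" for xs :: "nat list"
  have cG: "cmp (Suc 1) G2 GG"
    unfolding G2_def GG_def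
    by (rule cmp_cong, (rule cmpI3 cV cF' | simp)+)
  have GG0: "GG [m, x] = 0 \<longleftrightarrow> set (list_decode m) \<subseteq> S \<and> enc_str (Z (dec m)) = x" for m x
    using valid_iff[where S=S and m=m] by (auto simp: GG_def R_def)
  show ?thesis unfolding partial_recursive_def
  proof (intro exI allI)
    fix p :: "bool list" and y
    have key: "GG [m, enc_str p] = 0 \<longleftrightarrow> p \<in> range Z \<and> m = enc_str (inv Z p)" for m
    proof -
      have "GG [m, enc_str p] = 0 \<longleftrightarrow> (\<exists>s. m = enc_str s \<and> Z s = p)"
        unfolding GG0 enc_str_inj
        using enc_dec dec_enc valid_enc by metis
      also have "\<dots> \<longleftrightarrow> p \<in> range Z \<and> m = enc_str (inv Z p)"
        using assms(1) by (auto simp: inv_f_f)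
      finally show ?thesis .
    qed
    show "eval_recf (Mn G2) [enc_str p] y \<longleftrightarrow>
      (\<exists>ys. (if p \<in> range Z then Some (inv Z p) else None) = Some ys \<and> y = enc_str ys)"
    proof -
      have "eval_recf (Mn G2) [enc_str p] y \<longleftrightarrow> GG [y, enc_str p] = 0 \<and> (\<forall>m<y. GG [m, enc_str p] \<noteq> 0)"
        using eval_Mn[OF cG, of "[enc_str p]" y] by simp
      then show ?thesis unfolding key by auto
    qed
  qed
qed
lemma AIC_bound:
  fixes C :: "bool list \<Rightarrow> 'a::finite list option" and Z :: "'a list \<Rightarrow> bool list"
  assumes "universal_machine C" "recursive_reversible_coding Z"
  shows "\<exists>c. \<forall>s. AIC C s \<le> c + I_Z Z s"
proof -
  have "partial_recursive (\<lambda>p. if p \<in> range Z then Some (inv Z p) else None)"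
    using assms(2) inv_pr unfolding recursive_reversible_coding_def by blast
  then obtain pD where pD: "\<And>p. C (pD @ p) = (if p \<in> range Z then Some (inv Z p) else None)"
    using assms(1) unfolding universal_machine_def by blast
  have "AIC C s \<le> length pD + I_Z Z s" for s
  proof -
    have "C (pD @ Z s) = Some s" using pD[of "Z s"] assms(2)
      by (simp add: recursive_reversible_coding_def inv_f_f)
    then have "\<exists>P. length P = length (pD @ Z s) \<and> C P = Some s" by blast
    then show ?thesis unfolding AIC_def I_Z_def using Least_le[of "\<lambda>n. \<exists>P. length P = n \<and> C P = Some s"] by simp
  qed
  then show ?thesis by blast
qed


lemma map_upt_eq: "map \<omega> [0..<n] = xs \<longleftrightarrow> length xs = n \<and> (\<forall>i<n. \<omega> i = xs!i)"
proof
  assume h: "map \<omega> [0..<n] = xs"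
  show "length xs = n \<and> (\<forall>i<n. \<omega> i = xs!i)"
  proof
    show "length xs = n" using h by (metis length_map length_upt minus_nat.diff_0)
    show "\<forall>i<n. \<omega> i = xs!i" using h by auto
  qed
next
  assume h: "length xs = n \<and> (\<forall>i<n. \<omega> i = xs!i)"
  show "map \<omega> [0..<n] = xs" by (rule nth_equalityI) (use h in auto)
qed
lemma proj_sets:
  "{\<omega> :: nat \<Rightarrow> 'a::{finite, discrete_topology}. \<omega> i = a} \<in> sets borel"
proof -
  have o: "{a} \<in> sets (borel :: 'a measure)" by (rule borel_open) (rule discrete_topology_class.open_discrete)
  have "(\<lambda>\<omega>::nat \<Rightarrow> 'a. \<omega> i) -` {a} \<inter> space borel \<in> sets borel"
    by (rule measurable_sets[OF measurable_product_coordinates o])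
  then show ?thesis by (simp add: vimage_def)
qed

lemma initial_meas:
  assumes "sets M = sets (borel :: (nat \<Rightarrow> 'a::{finite, discrete_topology}) measure)"
  shows "(\<lambda>\<omega>. initial \<omega> n) \<in> measurable M (count_space UNIV)"
  unfolding measurable_count_space_eq2_countable
proof (intro conjI ballI)
  fix xs :: "'a list"
  have sp: "space M = UNIV" using sets_eq_imp_space_eq[OF assms] by simp
  have e: "(\<lambda>\<omega>. initial \<omega> n) -` {xs} \<inter> space M = {\<omega> \<in> space M. length xs = n \<and> (\<forall>i<n. \<omega> i = xs ! i)}"
    unfolding initial_def sp vimage_def using map_upt_eq by blast
  show "(\<lambda>\<omega>. initial \<omega> n) -` {xs} \<inter> space M \<in> sets M"
  proof (cases "length xs = n \<and> n \<noteq> 0")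
    case False
    then have "(\<lambda>\<omega>. initial \<omega> n) -` {xs} \<inter> space M = {} \<or> (\<lambda>\<omega>. initial \<omega> n) -` {xs} \<inter> space M = space M"
      unfolding e by auto
    then show ?thesis by auto
  next
    case True
    have "{\<omega> \<in> space M. \<forall>i\<in>{..<n}. \<omega> i = xs ! i} \<in> sets M"
    proof (intro sets.sets_Collect_finite_All')
      fix i assume "i \<in> {..<n}"
      show "{\<omega> \<in> space M. \<omega> i = xs ! i} \<in> sets M" unfolding sp assms using proj_sets by simp
    qed (use True in auto)
    moreover have "{\<omega> \<in> space M. \<forall>i\<in>{..<n}. \<omega> i = xs ! i} = (\<lambda>\<omega>. initial \<omega> n) -` {xs} \<inter> space M"
      unfolding e using True by auto
    ultimately show ?thesis by simp
  qed
qed simp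
lemma integrable_init:
  fixes M :: "(nat \<Rightarrow> 'a::{finite, discrete_topology}) measure" and h :: "'a list \<Rightarrow> nat"
  assumes "prob_space M" "sets M = sets borel"
  shows "integrable M (\<lambda>\<omega>. real (h (initial \<omega> n)) / real n powr q)"
proof -
  interpret prob_space M by fact
  define g where "g xs = real (h xs) / real n powr q" for xs
  define L where "L = {xs :: 'a list. set xs \<subseteq> UNIV \<and> length xs = n}"
  have fL: "finite L" unfolding L_def by (rule finite_lists_length_eq) simp
  have mg: "(\<lambda>\<omega>. g (initial \<omega> n)) \<in> borel_measurable M"
    by (rule measurable_compose[OF initial_meas[OF assms(2)]]) simp
  have "AE \<omega> in M. norm (g (initial \<omega> n)) \<le> Max (g ` L)"
  proof (rule AE_I2)
    fix \<omega> :: "nat \<Rightarrow> 'a"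
    have "initial \<omega> n \<in> L" unfolding L_def initial_def by simp
    moreover have "g xs \<ge> 0" for xs unfolding g_def by simp
    ultimately show "norm (g (initial \<omega> n)) \<le> Max (g ` L)" using fL by auto
  qed
  then show ?thesis using integrable_const_bound[OF _ mg] unfolding g_def by blast
qed

lemma limsup_e: "limsup (\<lambda>n. ereal (c / real n powr q)) = 0" if "q > 0"
proof -
  have "(\<lambda>n. c * real n powr (- q)) \<longlonglongrightarrow> c * 0"
    by (intro tendsto_mult tendsto_const tendsto_neg_powr filterlim_real_sequentially) (use that in auto)
  then have "(\<lambda>n. c / real n powr q) \<longlonglongrightarrow> 0"
    by (simp add: powr_minus divide_inverse)
  then have t: "(\<lambda>n. ereal (c / real n powr q)) \<longlonglongrightarrow> ereal 0" by (rule tendsto_ereal)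
  show ?thesis using lim_imp_Limsup[OF trivial_limit_sequentially t] by (simp add: zero_ereal_def)
qed

theorem theorem5p2:
  fixes M :: "(nat \<Rightarrow> 'a::{finite, discrete_topology}) measure"
    and C :: "bool list \<Rightarrow> 'a list option"
    and Z :: "'a list \<Rightarrow> bool list"
    and q :: real
  assumes "prob_space M"
    and "sets M = sets borel"
    and "universal_machine C"
    and "recursive_reversible_coding Z"
    and "q > 0"
  shows "q_entropy M (I_Z Z) q \<ge> q_entropy M (AIC C) q"
proof -
  interpret prob_space M by fact
  obtain c where cb: "\<And>s. AIC C s \<le> c + I_Z Z s" using AIC_bound[OF assms(3,4)] by blast
  define a where "a n = (\<integral>\<omega>. real (I_Z Z (initial \<omega> n)) / real n powr q \<partial>M)" for n
  define b where "b n = (\<integral>\<omega>. real (AIC C (initial \<omega> n)) / real n powr q \<partial>M)" for n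
  have ineq: "b n \<le> a n + c / real n powr q" for n
  proof -
    have "b n \<le> (\<integral>\<omega>. real (I_Z Z (initial \<omega> n)) / real n powr q + c / real n powr q \<partial>M)"
      unfolding b_def
    proof (rule integral_mono)
      show "integrable M (\<lambda>\<omega>. real (AIC C (initial \<omega> n)) / real n powr q)"
        by (rule integrable_init[OF assms(1,2)])
      show "integrable M (\<lambda>\<omega>. real (I_Z Z (initial \<omega> n)) / real n powr q + c / real n powr q)"
        by (rule Bochner_Integration.integrable_add[OF integrable_init[OF assms(1,2), of "I_Z Z"]]) simp
      fix \<omega> :: "nat \<Rightarrow> 'a"
      have "real (AIC C (initial \<omega> n)) \<le> real (I_Z Z (initial \<omega> n)) + real c"
        using cb[of "initial \<omega> n"] by simp
      then have "real (AIC C (initial \<omega> n)) / real n powr q \<le> (real (I_Z Z (initial \<omega> n)) + real c) / real n powr q"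
        by (intro divide_right_mono) auto
      then show "real (AIC C (initial \<omega> n)) / real n powr q \<le> real (I_Z Z (initial \<omega> n)) / real n powr q + c / real n powr q"
        by (simp add: add_divide_distrib)
    qed
    also have "\<dots> = a n + c / real n powr q"
      unfolding a_def
      by (subst Bochner_Integration.integral_add[OF integrable_init[OF assms(1,2), of "I_Z Z"]]) (simp_all add: prob_space)
    finally show ?thesis .
  qed
  have "q_entropy M (AIC C) q = limsup (\<lambda>n. ereal (b n))" unfolding q_entropy_def b_def ..
  also have "\<dots> \<le> limsup (\<lambda>n. ereal (a n) + ereal (c / real n powr q))"
    by (rule Limsup_mono) (use ineq in auto)
  also have "\<dots> \<le> limsup (\<lambda>n. ereal (a n)) + limsup (\<lambda>n. ereal (c / real n powr q))"
    by (rule ereal_limsup_add_mono)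
  also have "\<dots> = q_entropy M (I_Z Z) q"
    unfolding limsup_e[OF assms(5)] q_entropy_def a_def by simp
  finally show ?thesis .
qed

end
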